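(* Let $d\geq1$, $p\in[1,\infty)\setminus\{2\}$, and $\lambda_1,\dots,\lambda_d>0$. Define $g:(0,\infty)\to(0,\infty)$ by $$g(\beta)=\left(\frac{\sum_{i=1}^{d}\frac{1}{1+\beta^{1/p}\lambda_i}}{\sum_{i=1}^{d}\frac{\lambda_i}{1+\beta^{1/p}\lambda_i}}\right)^{\frac{p}{3p-1}}.$$ Then $g$ has a unique fixed point $\beta^*_{\mathrm{vol}}>0$, and for every initial value $\beta_0>0$ the iterates $\beta_{n+1}=g(\beta_n)$, $n=0,1,2,\dots$, satisfy $\lim_{n\to\infty}\beta_n=\beta^*_{\mathrm{vol}}$. *)

theory Defs
  imports "HOL-Analysis.Analysis"
begin

definition vol_map :: "nat \<Rightarrow> real \<Rightarrow> (nat \<Rightarrow> real) \<Rightarrow> real \<Rightarrow> real" where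
  "vol_map d p lam \<beta> =
     ((\<Sum>i=1..d. 1 / (1 + \<beta> powr (1/p) * lam i)) /
      (\<Sum>i=1..d. lam i / (1 + \<beta> powr (1/p) * lam i))) powr (p / (3*p - 1))"

end

theory Submission
  imports Defs
begin

definition SA :: "nat \<Rightarrow> (nat \<Rightarrow> real) \<Rightarrow> real \<Rightarrow> real" where
  "SA d lam s = (\<Sum>i=1..d. 1 / (1 + s * lam i))"
definition SB :: "nat \<Rightarrow> (nat \<Rightarrow> real) \<Rightarrow> real \<Rightarrow> real" where
  "SB d lam s = (\<Sum>i=1..d. lam i / (1 + s * lam i))"

lemma SA_pos:
  assumes "d \<ge> 1" "\<And>i. i \<in> {1..d} \<Longrightarrow> lam i > 0" "s \<ge> 0"
  shows "SA d lam s > 0"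
  unfolding SA_def
proof (rule sum_pos)
  fix i assume "i \<in> {1..d}"
  with assms have "1 + s * lam i > 0" by (smt (verit) mult_nonneg_nonneg)
  then show "0 < 1 / (1 + s * lam i)" by simp
qed (use assms in auto)

lemma SB_pos:
  assumes "d \<ge> 1" "\<And>i. i \<in> {1..d} \<Longrightarrow> lam i > 0" "s \<ge> 0"
  shows "SB d lam s > 0"
  unfolding SB_def
proof (rule sum_pos)
  fix i assume i: "i \<in> {1..d}"
  with assms have "1 + s * lam i > 0" by (smt (verit) mult_nonneg_nonneg)
  then show "0 < lam i / (1 + s * lam i)" using assms(2)[OF i] by simp
qed (use assms in auto)

lemma SA_SB:
  assumes "\<And>i. i \<in> {1..d} \<Longrightarrow> lam i > 0" "s \<ge> 0"
  shows "SA d lam s + s * SB d lam s = d"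
proof -
  have "SA d lam s + s * SB d lam s = (\<Sum>i=1..d. 1 / (1 + s * lam i) + s * (lam i / (1 + s * lam i)))"
    unfolding SA_def SB_def by (simp add: sum.distrib sum_distrib_left)
  also have "\<dots> = (\<Sum>i=1..d. (1::real))"
  proof (rule sum.cong)
    fix i assume i: "i \<in> {1..d}"
    with assms have "1 + s * lam i > 0" by (smt (verit) mult_nonneg_nonneg)
    then show "1 / (1 + s * lam i) + s * (lam i / (1 + s * lam i)) = 1"
      by (simp add: field_simps)
  qed simp
  finally show ?thesis by simp
qed

lemma SA_mono:
  assumes "\<And>i. i \<in> {1..d} \<Longrightarrow> lam i > 0" "0 \<le> s1" "s1 \<le> s2"
  shows "SA d lam s2 \<le> SA d lam s1"
  unfolding SA_def
proof (rule sum_mono)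
  fix i assume i: "i \<in> {1..d}"
  with assms have "1 + s1 * lam i > 0" by (smt (verit) mult_nonneg_nonneg)
  moreover have "s1 * lam i \<le> s2 * lam i" using assms(1)[OF i] assms(3) by simp
  ultimately show "1 / (1 + s2 * lam i) \<le> 1 / (1 + s1 * lam i)"
    by (intro divide_left_mono) auto
qed

lemma key_term:
  fixes x y s1 s2 :: real
  assumes "x > 0" "y > 0" "0 \<le> s1" "s1 \<le> s2"
  shows "(y - x) * (1 / (1 + s1 * x) * (1 / (1 + s2 * y)) - 1 / (1 + s2 * x) * (1 / (1 + s1 * y))) \<le> 0"
proof -
  have p1: "1 + s1 * x > 0" "1 + s1 * y > 0" using assms by (smt (verit) mult_nonneg_nonneg)+
  have p2: "1 + s2 * x > 0" "1 + s2 * y > 0" using assms by (smt (verit) mult_nonneg_nonneg)+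
  define P where "P = (1 + s1 * x) * (1 + s2 * y) * (1 + s2 * x) * (1 + s1 * y)"
  have Pp: "P > 0" unfolding P_def using p1 p2 by simp
  have "1 / (1 + s1 * x) * (1 / (1 + s2 * y)) - 1 / (1 + s2 * x) * (1 / (1 + s1 * y))
      = (s2 - s1) * (x - y) / P"
  proof -
    have "1 / (1 + s1 * x) * (1 / (1 + s2 * y)) - 1 / (1 + s2 * x) * (1 / (1 + s1 * y))
      = ((1 + s2 * x) * (1 + s1 * y) - (1 + s1 * x) * (1 + s2 * y)) / P"
      unfolding P_def using p1 p2 by (simp add: diff_frac_eq mult.assoc mult.left_commute)
    also have "(1 + s2 * x) * (1 + s1 * y) - (1 + s1 * x) * (1 + s2 * y) = (s2 - s1) * (x - y)"
      by (simp add: algebra_simps)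
    finally show ?thesis .
  qed
  then have "(y - x) * (1 / (1 + s1 * x) * (1 / (1 + s2 * y)) - 1 / (1 + s2 * x) * (1 / (1 + s1 * y)))
     = - ((s2 - s1) * (x - y)^2) / P" by (simp add: power2_eq_square algebra_simps)
  also have "\<dots> \<le> 0" using Pp assms by (simp add: divide_nonneg_pos)
  finally show ?thesis .
qed

lemma AB_mono:
  assumes "\<And>i. i \<in> {1..d} \<Longrightarrow> lam i > 0" "0 \<le> s1" "s1 \<le> s2"
  shows "SA d lam s1 * SB d lam s2 \<le> SA d lam s2 * SB d lam s1"
proof -
  define w1 where "w1 i = 1 / (1 + s1 * lam i)" for i
  define w2 where "w2 i = 1 / (1 + s2 * lam i)" for i
  define D where "D i j = w1 i * (lam j * w2 j) - w2 i * (lam j * w1 j)" for i j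
  have e: "SA d lam s1 * SB d lam s2 - SA d lam s2 * SB d lam s1 = (\<Sum>i=1..d. \<Sum>j=1..d. D i j)"
    unfolding SA_def SB_def D_def w1_def w2_def
    by (simp add: sum_product sum_subtractf times_divide_eq_right)
  have sw: "(\<Sum>i=1..d. \<Sum>j=1..d. D i j) = (\<Sum>i=1..d. \<Sum>j=1..d. D j i)"
    by (rule sum.swap)
  have "2 * (\<Sum>i=1..d. \<Sum>j=1..d. D i j) = (\<Sum>i=1..d. \<Sum>j=1..d. D i j + D j i)"
    using sw by (simp add: sum.distrib)
  also have "\<dots> \<le> 0"
  proof (intro sum_nonpos)
    fix i j assume i: "i \<in> {1..d}" and j: "j \<in> {1..d}"
    have "D i j + D j i = (lam j - lam i) * (w1 i * w2 j - w2 i * w1 j)"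
      unfolding D_def by (simp add: algebra_simps)
    also have "\<dots> \<le> 0" unfolding w1_def w2_def by (rule key_term) (use assms i j in auto)
    finally show "D i j + D j i \<le> 0" .
  qed
  finally show ?thesis using e by simp
qed

definition hh :: "nat \<Rightarrow> (nat \<Rightarrow> real) \<Rightarrow> real \<Rightarrow> real" where
  "hh d lam s = SA d lam s / SB d lam s"

lemma hh_pos:
  assumes "d \<ge> 1" "\<And>i. i \<in> {1..d} \<Longrightarrow> lam i > 0" "s \<ge> 0"
  shows "hh d lam s > 0"
  unfolding hh_def using SA_pos[OF assms] SB_pos[OF assms] by simp

lemma hh_mono:
  assumes "d \<ge> 1" "\<And>i. i \<in> {1..d} \<Longrightarrow> lam i > 0" "0 \<le> s1" "s1 \<le> s2"
  shows "hh d lam s1 \<le> hh d lam s2"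
proof -
  have b1: "SB d lam s1 > 0" using SB_pos assms by simp
  have b2: "SB d lam s2 > 0" using SB_pos assms by simp
  have "SA d lam s1 * SB d lam s2 \<le> SA d lam s2 * SB d lam s1"
    using AB_mono assms by blast
  then show ?thesis unfolding hh_def using b1 b2 by (simp add: divide_simps mult.commute)
qed

lemma hh_scale:
  assumes "d \<ge> 1" "\<And>i. i \<in> {1..d} \<Longrightarrow> lam i > 0" "0 < s1" "s1 \<le> s2"
  shows "hh d lam s2 * s1 \<le> hh d lam s1 * s2"
proof -
  have b1: "SB d lam s1 > 0" using SB_pos assms by simp
  have b2: "SB d lam s2 > 0" using SB_pos assms by simp
  have e1: "s1 * SB d lam s1 = d - SA d lam s1" using SA_SB[of d lam s1] assms by simp
  have e2: "s2 * SB d lam s2 = d - SA d lam s2" using SA_SB[of d lam s2] assms by simp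
  have m: "SA d lam s2 \<le> SA d lam s1" using SA_mono[of d lam s1 s2] assms by simp
  have a2: "SA d lam s2 > 0" using SA_pos[of d lam s2] assms by simp
  have "SA d lam s2 * (d - SA d lam s1) \<le> SA d lam s1 * (d - SA d lam s2)"
    using m by (simp add: algebra_simps mult_left_mono)
  then have "SA d lam s2 * (s1 * SB d lam s1) \<le> SA d lam s1 * (s2 * SB d lam s2)"
    using e1 e2 by simp
  then show ?thesis unfolding hh_def using b1 b2
    by (simp add: divide_simps algebra_simps)
qed

lemma vol_map_eq:
  assumes "p > 0"
  shows "vol_map d p lam (exp t) = hh d lam (exp (t / p)) powr (p / (3*p - 1))"
proof -
  have "exp t powr (1/p) = exp (t / p)" by (simp add: powr_def)
  then show ?thesis unfolding vol_map_def hh_def SA_def SB_def by simp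
qed

lemma G_lip_ordered:
  assumes "d \<ge> 1" "\<And>i. i \<in> {1..d} \<Longrightarrow> lam i > 0" "p \<ge> 1" "t1 \<le> t2"
  shows "0 \<le> ln (vol_map d p lam (exp t2)) - ln (vol_map d p lam (exp t1))
     \<and> ln (vol_map d p lam (exp t2)) - ln (vol_map d p lam (exp t1)) \<le> (1/2) * (t2 - t1)"
proof -
  define q where "q = p / (3*p - 1)"
  have qp: "q > 0" unfolding q_def using assms by simp
  define s1 where "s1 = exp (t1 / p)"
  define s2 where "s2 = exp (t2 / p)"
  have s1p: "s1 > 0" and s12: "s1 \<le> s2" unfolding s1_def s2_def using assms
    by (auto simp: divide_right_mono)
  have h1: "hh d lam s1 > 0" using hh_pos assms s1p by simp
  have h2: "hh d lam s2 > 0" using hh_pos assms s1p s12 by simp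
  have G1: "ln (vol_map d p lam (exp t1)) = q * ln (hh d lam s1)"
    unfolding s1_def q_def using vol_map_eq[of p d lam t1] assms h1 s1_def by (simp add: ln_powr)
  have G2: "ln (vol_map d p lam (exp t2)) = q * ln (hh d lam s2)"
    unfolding s2_def q_def using vol_map_eq[of p d lam t2] assms h2 s2_def by (simp add: ln_powr)
  have m: "ln (hh d lam s1) \<le> ln (hh d lam s2)"
    using hh_mono[of d lam s1 s2] assms s1p s12 h1 h2 by simp
  have sc: "hh d lam s2 * s1 \<le> hh d lam s1 * s2" using hh_scale[of d lam s1 s2] assms s1p s12 by simp
  then have "ln (hh d lam s2 * s1) \<le> ln (hh d lam s1 * s2)"
    using h1 h2 s1p s12 by simp
  then have "ln (hh d lam s2) + ln s1 \<le> ln (hh d lam s1) + ln s2"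
    using h1 h2 s1p s12 by (simp add: ln_mult)
  then have L: "ln (hh d lam s2) - ln (hh d lam s1) \<le> (t2 - t1) / p"
    unfolding s1_def s2_def by (simp add: diff_divide_distrib)
  have "q * (ln (hh d lam s2) - ln (hh d lam s1)) \<le> q * ((t2 - t1) / p)"
    using L qp by (intro mult_left_mono) auto
  also have "q * ((t2 - t1) / p) = (t2 - t1) / (3*p - 1)" unfolding q_def using assms by simp
  also have "\<dots> \<le> (1/2) * (t2 - t1)"
  proof -
    have "(t2 - t1) * 2 \<le> (t2 - t1) * (3*p - 1)" by (rule mult_left_mono) (use assms in auto)
    then show ?thesis using assms by (simp add: divide_simps algebra_simps)
  qed
  finally show ?thesis using G1 G2 m qp by (simp add: right_diff_distrib)
qed

theorem theorem3:
  fixes d :: nat and p :: real and lam :: "nat \<Rightarrow> real"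
  assumes "d \<ge> 1" and "p \<ge> 1" and "p \<noteq> 2"
    and "\<And>i. i \<in> {1..d} \<Longrightarrow> lam i > 0"
  shows "\<exists>b>0. vol_map d p lam b = b
            \<and> (\<forall>c>0. vol_map d p lam c = c \<longrightarrow> c = b)
            \<and> (\<forall>\<beta>0>0. (\<lambda>n. ((vol_map d p lam) ^^ n) \<beta>0) \<longlonglongrightarrow> b)"
proof -
  define V where "V = vol_map d p lam"
  define G where "G t = ln (V (exp t))" for t
  have Vpos: "V (exp t) > 0" for t
  proof -
    have "hh d lam (exp (t / p)) > 0" using hh_pos[of d lam "exp (t/p)"] assms by simp
    then show ?thesis unfolding V_def using vol_map_eq[of p d lam t] assms by simp
  qed
  have expG: "exp (G t) = V (exp t)" for t unfolding G_def using Vpos by simp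
  have lip: "\<forall>x y. dist (G x) (G y) \<le> 1/2 * dist x y"
  proof (intro allI)
    fix x y :: real
    show "dist (G x) (G y) \<le> 1/2 * dist x y"
    proof (cases "x \<le> y")
      case True
      have "0 \<le> G y - G x \<and> G y - G x \<le> 1/2 * (y - x)"
        using G_lip_ordered[of d lam p x y] assms True unfolding G_def V_def by simp
      then show ?thesis using True unfolding dist_real_def by (simp add: abs_if)
    next
      case False
      have "0 \<le> G x - G y \<and> G x - G y \<le> 1/2 * (x - y)"
        using G_lip_ordered[of d lam p y x] assms False unfolding G_def V_def by simp
      then show ?thesis using False unfolding dist_real_def by (simp add: abs_if)
    qed
  qed
  obtain ts where ts: "G ts = ts" and tsu: "\<And>u. G u = u \<Longrightarrow> u = ts"
  proof -
    have "\<exists>!x. G x = x" by (rule banach_fix_type[of "1/2" G]) (use lip in simp_all)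
    then show ?thesis using that by blast
  qed
  define b where "b = exp ts"
  have it: "(V ^^ n) (exp u) = exp ((G ^^ n) u)" for n u
    by (induction n) (simp_all add: expG)
  have contr: "\<bar>(G ^^ n) u - ts\<bar> \<le> (1/2)^n * \<bar>u - ts\<bar>" for n u
  proof (induction n)
    case 0 then show ?case by simp
  next
    case (Suc n)
    have "\<bar>(G ^^ Suc n) u - ts\<bar> = dist (G ((G ^^ n) u)) (G ts)" using ts by (simp add: dist_real_def)
    also have "\<dots> \<le> 1/2 * \<bar>(G ^^ n) u - ts\<bar>" using lip by (simp add: dist_real_def)
    also have "\<dots> \<le> 1/2 * ((1/2)^n * \<bar>u - ts\<bar>)" using Suc by simp
    finally show ?case by simp
  qed
  have conv: "(\<lambda>n. (V ^^ n) \<beta>0) \<longlonglongrightarrow> b" if "\<beta>0 > 0" for \<beta>0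
  proof -
    define u where "u = ln \<beta>0"
    have "(\<lambda>n. (1/2::real)^n * \<bar>u - ts\<bar>) \<longlonglongrightarrow> 0"
      by (intro tendsto_mult_left_zero LIMSEQ_power_zero) auto
    then have "(\<lambda>n. (G ^^ n) u - ts) \<longlonglongrightarrow> 0"
      by (rule Lim_null_comparison[rotated]) (use contr in simp)
    then have "(\<lambda>n. ((G ^^ n) u - ts) + ts) \<longlonglongrightarrow> 0 + ts"
      by (intro tendsto_add tendsto_const)
    then have "(\<lambda>n. (G ^^ n) u) \<longlonglongrightarrow> ts" by simp
    then have "(\<lambda>n. exp ((G ^^ n) u)) \<longlonglongrightarrow> exp ts" by (rule tendsto_exp)
    moreover have "(V ^^ n) \<beta>0 = exp ((G ^^ n) u)" for n
      using it[of n u] that unfolding u_def by simp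
    ultimately show ?thesis unfolding b_def by simp
  qed
  show ?thesis unfolding V_def[symmetric]
  proof (intro exI[of _ b] conjI allI impI)
    show "b > 0" unfolding b_def by simp
    show "V b = b" unfolding b_def using expG[of ts] ts by simp
    fix c :: real assume c: "c > 0" "V c = c"
    then have "G (ln c) = ln c" unfolding G_def by simp
    then have "ln c = ts" by (rule tsu)
    then show "c = b" unfolding b_def using c by auto
  next
    fix \<beta>0 :: real assume "\<beta>0 > 0"
    then show "(\<lambda>n. (V ^^ n) \<beta>0) \<longlonglongrightarrow> b" by (rule conv)
  qed
qed

end
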